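(* Assume $2k+1 \le n/4$. Consider the random hard instance $\mathcal{D}$ and any randomized algorithm that makes exactly $n/4$ comparison queries. Let $C$ be the set of critical elements and $T$ the (random) set of elements that appear in at least one query made by the algorithm. Then $\mathbb{E}[|C \cap T|] \le \frac{2k+1}{2}$.
   Context: Model: $n$ elements, exactly $k$ corrupted; a tournament (comparison graph) says for each pair which is larger; restricted to uncorrupted elements it is acyclic, comparisons involving corrupted elements arbitrary. A comparison query reveals the orientation of one pair. Random hard instance $\mathcal{D}$: take $2k+1$ critical elements $c_0,\dots,c_{2k}$ consisting of the $k$ corrupted elements and the top $k+1$ uncorrupted elements, with comparisons among them forming the cyclic tournament in which $c_i$ is larger than $c_{i+1},\dots,c_{i+k}$ (indices mod $2k+1$); every critical element is larger than every non-critical element, and the $n-2k-1$ non-critical (uncorrupted) elements are totally ordered; then the labels (indices) of all $n$ elements are permuted uniformly at random. The set of critical elements is denoted $C$. Expectations are over the instance randomness and the algorithm's randomness. *)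

theory Defs
  imports "HOL-Probability.Probability" "HOL-Combinatorics.Permutations"
begin

text \<open>Positions 0..2k are the critical elements c_0..c_2k; positions 2k+1..n-1 are the
  non-critical elements, totally ordered (smaller position = larger element).
  canon_gt k i j means: the element at position i is larger than the one at position j.\<close>
definition canon_gt :: "nat \<Rightarrow> nat \<Rightarrow> nat \<Rightarrow> bool" where
  "canon_gt k i j =
     (if i < 2*k+1 \<and> j < 2*k+1 then (j + (2*k+1) - i) mod (2*k+1) \<in> {1..k}
      else if i < 2*k+1 then True
      else if j < 2*k+1 then False
      else i < j)"

text \<open>Labelled instance: sigma maps each label (element) to its canonical position;
  sigma is a uniformly random permutation of {0..<n}.\<close>
definition inst_gt :: "nat \<Rightarrow> (nat \<Rightarrow> nat) \<Rightarrow> nat \<Rightarrow> nat \<Rightarrow> bool" where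
  "inst_gt k p a b = canon_gt k (p a) (p b)"

definition critical :: "nat \<Rightarrow> nat \<Rightarrow> (nat \<Rightarrow> nat) \<Rightarrow> nat set" where
  "critical n k p = {a \<in> {0..<n}. p a < 2*k+1}"

definition hard_instance :: "nat \<Rightarrow> (nat \<Rightarrow> nat) pmf" where
  "hard_instance n = pmf_of_set {p. p permutes {0..<n}}"

text \<open>A deterministic adaptive comparison strategy: given the history of past queries
  and their answers, choose the next pair to compare.  A randomized algorithm is a
  probability distribution over such strategies (its random seed), independent of the
  instance.\<close>
type_synonym history = "((nat \<times> nat) \<times> bool) list"
type_synonym strategy = "history \<Rightarrow> nat \<times> nat"

fun run :: "strategy \<Rightarrow> (nat \<Rightarrow> nat \<Rightarrow> bool) \<Rightarrow> nat \<Rightarrow> history" where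
  "run s g 0 = []"
| "run s g (Suc m) = (let h = run s g m; q = s h in h @ [(q, g (fst q) (snd q))])"

definition touched :: "history \<Rightarrow> nat set" where
  "touched h = (\<Union>e \<in> set h. {fst (fst e), snd (fst e)})"

definition valid_strategy :: "nat \<Rightarrow> strategy \<Rightarrow> bool" where
  "valid_strategy n s = (\<forall>h. fst (s h) < n \<and> snd (s h) < n \<and> fst (s h) \<noteq> snd (s h))"

end

theory Submission
  imports Defs
begin

definition PS :: "nat \<Rightarrow> nat set \<Rightarrow> (nat\<Rightarrow>nat) \<Rightarrow> (nat\<Rightarrow>nat) set" where
  "PS n S q = {p. p permutes {0..<n} \<and> (\<forall>a\<in>S. p a = q a)}"

lemma PS_eq:
  assumes q: "q permutes {0..<n}" and S: "S \<subseteq> {0..<n}"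
  shows "PS n S q = (\<lambda>r. q \<circ> r) ` {r. r permutes ({0..<n} - S)}"
proof (intro set_eqI iffI)
  fix p assume "p \<in> PS n S q"
  hence p: "p permutes {0..<n}" and pS: "\<forall>a\<in>S. p a = q a" by (auto simp: PS_def)
  define r where "r = inv q \<circ> p"
  have r1: "r permutes {0..<n}" unfolding r_def by (intro permutes_compose p permutes_inv q)
  have "r permutes ({0..<n} - S)"
  proof (rule permutes_superset[OF r1])
    fix x assume "x \<in> {0..<n} - ({0..<n} - S)"
    hence "x \<in> S" by auto
    thus "r x = x" using pS permutes_inverses(2)[OF q] by (simp add: r_def)
  qed
  moreover have "p = q \<circ> r" unfolding r_def using permutes_inv_o(1)[OF q] by (simp add: o_assoc)
  ultimately show "p \<in> (\<lambda>r. q \<circ> r) ` {r. r permutes ({0..<n} - S)}" by blast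
next
  fix p assume "p \<in> (\<lambda>r. q \<circ> r) ` {r. r permutes ({0..<n} - S)}"
  then obtain r where r: "r permutes ({0..<n} - S)" and pr: "p = q \<circ> r" by blast
  have "r permutes {0..<n}" using permutes_subset[OF r] by auto
  hence "p permutes {0..<n}" using pr q permutes_compose by blast
  moreover have "\<forall>a\<in>S. p a = q a" using pr permutes_not_in[OF r] by auto
  ultimately show "p \<in> PS n S q" by (simp add: PS_def)
qed

lemma card_PS:
  assumes q: "q permutes {0..<n}" and S: "S \<subseteq> {0..<n}"
  shows "card (PS n S q) = fact (n - card S)"
proof -
  have "inj (\<lambda>r. q \<circ> r)"
    by (metis (no_types, lifting) fun.inj_map inj_onI permutes_inj q)
  hence "card (PS n S q) = card {r. r permutes ({0..<n} - S)}"
    unfolding PS_eq[OF q S] by (meson card_image inj_on_subset subset_UNIV)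
  also have "\<dots> = fact (n - card S)"
    by (rule card_permutations) (use S in \<open>auto simp: card_Diff_subset finite_subset\<close>)
  finally show ?thesis .
qed

lemma finite_PS: "finite (PS n S q)"
proof -
  have "PS n S q \<subseteq> {p. p permutes {0..<n}}" by (auto simp: PS_def)
  thus ?thesis using finite_permutations[of "{0..<n}"] finite_subset by auto
qed

fun cont :: "((nat\<times>nat) list \<Rightarrow> nat) \<Rightarrow> (nat\<Rightarrow>nat) \<Rightarrow> (nat\<times>nat) list \<Rightarrow> nat \<Rightarrow> (nat\<times>nat) list" where
  "cont t p h 0 = h"
| "cont t p h (Suc m) = cont t p (h @ [(t h, p (t h))]) m"

lemma fiber:
  assumes q: "q permutes {0..<n}" and S: "S \<subseteq> {0..<n}" and a: "a \<in> {0..<n} - S"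
    and v: "v \<in> {0..<n} - q ` S"
  shows "{p \<in> PS n S q. p a = v} = PS n (insert a S) (Transposition.transpose v (q a) \<circ> q)"
    and "Transposition.transpose v (q a) \<circ> q permutes {0..<n}"
    and "(Transposition.transpose v (q a) \<circ> q) ` insert a S = insert v (q ` S)"
proof -
  have qa: "q a \<in> {0..<n}" using a permutes_in_image[OF q] by auto
  have qS: "\<And>b. b \<in> S \<Longrightarrow> q b \<noteq> v" using v by auto
  have qS2: "\<And>b. b \<in> S \<Longrightarrow> q b \<noteq> q a" using a permutes_inj[OF q] by (metis DiffD2 injD)
  have eqS: "\<And>b. b \<in> S \<Longrightarrow> (Transposition.transpose v (q a) \<circ> q) b = q b"
    using qS qS2 by (simp add: transpose_def)
  have eqa: "(Transposition.transpose v (q a) \<circ> q) a = v" by (simp add: transpose_def)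
  show "Transposition.transpose v (q a) \<circ> q permutes {0..<n}"
    by (intro permutes_compose q permutes_swap_id) (use v qa in auto)
  show "(Transposition.transpose v (q a) \<circ> q) ` insert a S = insert v (q ` S)"
    using eqS eqa by (auto simp del: o_apply)
  show "{p \<in> PS n S q. p a = v} = PS n (insert a S) (Transposition.transpose v (q a) \<circ> q)"
    using eqS eqa unfolding PS_def by (auto simp del: o_apply)
qed

lemma card_W:
  assumes q: "q permutes {0..<n}" and S: "S \<subseteq> {0..<n}"
  shows "card ({0..<n} - q ` S) = n - card S"
proof -
  have "q ` S \<subseteq> {0..<n}" using S permutes_in_image[OF q] by auto
  moreover have "card (q ` S) = card S"
    using permutes_inj[OF q] by (meson card_image inj_on_subset subset_UNIV)
  ultimately show ?thesis by (simp add: card_Diff_subset finite_subset)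
qed

lemma core:
  assumes q: "q permutes {0..<n}" and S: "S \<subseteq> {0..<n}" and hS: "set (map fst h) \<subseteq> S"
    and t: "\<forall>h. t h < n"
  shows "(\<Sum>p\<in>PS n S q. real (card {a \<in> set (map fst (cont t p h m)) - S. p a < R}))
     \<le> real (card (PS n S q)) * m * card {w \<in> {0..<n} - q ` S. w < R} / real (n - card S)"
  using q S hS
proof (induction m arbitrary: S q h)
  case 0
  have "\<And>p. {a \<in> set (map fst (cont t p h 0)) - S. p a < R} = {}" using 0 by auto
  then show ?case by (simp only: card.empty of_nat_0 sum.neutral_const) simp
next
  case (Suc m)
  note q = Suc.prems(1) and S = Suc.prems(2) and hS = Suc.prems(3)
  define a where "a = t h"
  define c where "c = card {w \<in> {0..<n} - q ` S. w < R}"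
  define X where "X = (\<lambda>p. real (card {b \<in> set (map fst (cont t p h (Suc m))) - S. p b < R}))"
  have nn: "0 \<le> real (card (PS n S q)) * real c / real (n - card S)" by simp
  show ?case
  proof (cases "a \<in> S")
    case True
    have "(\<Sum>p\<in>PS n S q. X p) = (\<Sum>p\<in>PS n S q. real (card {b \<in> set (map fst (cont t p (h @ [(a, q a)]) m)) - S. p b < R}))"
      by (intro sum.cong refl) (use True in \<open>auto simp: X_def a_def PS_def\<close>)
    also have "\<dots> \<le> real (card (PS n S q)) * m * c / real (n - card S)"
      unfolding c_def by (rule Suc.IH[OF q S]) (use hS True in auto)
    also have "\<dots> \<le> real (card (PS n S q)) * Suc m * c / real (n - card S)"
      by (intro divide_right_mono mult_right_mono mult_left_mono) auto
    finally show ?thesis by (simp add: X_def c_def)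
  next
    case False
    have aS: "a \<in> {0..<n} - S" using False t by (auto simp: a_def)
    define W where "W = {0..<n} - q ` S"
    define N where "N = n - card S"
    have cW: "card W = N" unfolding W_def N_def by (rule card_W[OF q S])
    have qaW: "q a \<in> W"
    proof -
      have "q a < n" using aS permutes_in_image[OF q] by auto
      moreover have "q a \<notin> q ` S" using aS permutes_inj[OF q] by (auto simp: inj_eq)
      ultimately show ?thesis by (simp add: W_def)
    qed
    have N1: "N \<ge> 1" using qaW cW card_gt_0_iff[of W] by (auto simp: W_def)
    have finS: "finite S" using S finite_subset by blast
    have cardS: "card (insert a S) = Suc (card S)" using aS finS by simp
    define F :: real where "F = fact (N - 1)"
    have cardP: "real (card (PS n S q)) = N * F"
    proof -
      obtain N' where N': "N = Suc N'" using N1 by (cases N) auto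
      have "card (PS n S q) = fact N" using card_PS[OF q S] by (simp add: N_def)
      thus ?thesis using N' by (simp add: F_def algebra_simps)
    qed
    define qv where "qv = (\<lambda>v. Transposition.transpose v (q a) \<circ> q)"
    define cv where "cv = (\<lambda>v. card {w \<in> {0..<n} - qv v ` insert a S. w < R})"
    have fib: "\<And>v. v \<in> W \<Longrightarrow> {p \<in> PS n S q. p a = v} = PS n (insert a S) (qv v)"
      using fiber(1)[OF q S aS] by (simp add: W_def qv_def)
    have qvp: "\<And>v. v \<in> W \<Longrightarrow> qv v permutes {0..<n}"
      using fiber(2)[OF q S aS] by (simp add: W_def qv_def)
    have cardPv: "\<And>v. v \<in> W \<Longrightarrow> real (card {p \<in> PS n S q. p a = v}) = F"
      using card_PS[OF qvp, of _ "insert a S"] aS S cardS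
      by (simp add: fib F_def N_def)
    have cv_eq: "\<And>v. v \<in> W \<Longrightarrow> real (cv v) = real c - of_bool (v < R)"
    proof -
      fix v assume v: "v \<in> W"
      have "{w \<in> {0..<n} - qv v ` insert a S. w < R} = {w \<in> W. w < R} - {v}"
        using fiber(3)[OF q S aS, of v] v by (auto simp: qv_def W_def)
      moreover have "finite {w \<in> W. w < R}" by (simp add: W_def)
      ultimately have e: "cv v = card ({w \<in> W. w < R} - {v})" by (simp add: cv_def)
      have cc: "c = card {w \<in> W. w < R}" by (simp add: c_def W_def)
      show "real (cv v) = real c - of_bool (v < R)"
      proof (cases "v < R")
        case True
        hence "v \<in> {w \<in> W. w < R}" using v by simp
        hence "card {w \<in> W. w < R} \<ge> 1" using \<open>finite {w \<in> W. w < R}\<close>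
          by (metis One_nat_def Suc_leI card_gt_0_iff empty_iff)
        then show ?thesis using True e cc \<open>v \<in> {w \<in> W. w < R}\<close> \<open>finite {w \<in> W. w < R}\<close>
          by (simp add: of_nat_diff)
      next
        case False
        then show ?thesis using e cc by simp
      qed
    qed
    have img: "(\<lambda>p. p a) ` PS n S q \<subseteq> W"
    proof
      fix x assume "x \<in> (\<lambda>p. p a) ` PS n S q"
      then obtain p where p: "p \<in> PS n S q" and x: "x = p a" by blast
      have pp: "p permutes {0..<n}" and pS: "\<forall>b\<in>S. p b = q b" using p by (auto simp: PS_def)
      have "p a < n" using permutes_in_image[OF pp] aS by auto
      moreover have "p a \<notin> q ` S"
      proof
        assume "p a \<in> q ` S"
        then obtain b where "b \<in> S" "p a = q b" by auto
        hence "p a = p b" using pS by auto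
        hence "a = b" using permutes_inj[OF pp] by (simp add: inj_eq)
        thus False using aS \<open>b \<in> S\<close> by auto
      qed
      ultimately show "x \<in> W" using x by (auto simp: W_def)
    qed
    have step: "\<And>v p. v \<in> W \<Longrightarrow> p \<in> {p \<in> PS n S q. p a = v} \<Longrightarrow>
       X p \<le> of_bool (v < R) + real (card {b \<in> set (map fst (cont t p (h @ [(a, v)]) m)) - insert a S. p b < R})"
    proof -
      fix v p assume v: "v \<in> W" and p: "p \<in> {p \<in> PS n S q. p a = v}"
      hence pa: "p a = v" by auto
      define L where "L = set (map fst (cont t p (h @ [(a, v)]) m))"
      have "X p = real (card {b \<in> L - S. p b < R})"
        by (simp add: X_def L_def a_def[symmetric] pa)
      also have "{b \<in> L - S. p b < R} \<subseteq> {b \<in> {a}. p b < R} \<union> {b \<in> L - insert a S. p b < R}" by auto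
      hence "card {b \<in> L - S. p b < R} \<le> card ({b \<in> {a}. p b < R} \<union> {b \<in> L - insert a S. p b < R})"
        by (intro card_mono) (auto simp: L_def)
      hence "real (card {b \<in> L - S. p b < R}) \<le> real (card {b \<in> {a}. p b < R}) + real (card {b \<in> L - insert a S. p b < R})"
        using card_Un_le[of "{b \<in> {a}. p b < R}" "{b \<in> L - insert a S. p b < R}"] by linarith
      also have "{b \<in> {a}. p b < R} = (if v < R then {a} else {})" using pa by auto
      hence "real (card {b \<in> {a}. p b < R}) = of_bool (v < R)" by simp
      finally show "X p \<le> of_bool (v < R) + real (card {b \<in> set (map fst (cont t p (h @ [(a, v)]) m)) - insert a S. p b < R})"
        by (simp add: L_def)
    qed
    have IH: "\<And>v. v \<in> W \<Longrightarrow> (\<Sum>p\<in>{p \<in> PS n S q. p a = v}. real (card {b \<in> set (map fst (cont t p (h @ [(a, v)]) m)) - insert a S. p b < R}))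
        \<le> F * m * cv v / real (N - 1)"
    proof -
      fix v assume v: "v \<in> W"
      have "(\<Sum>p\<in>PS n (insert a S) (qv v). real (card {b \<in> set (map fst (cont t p (h @ [(a, v)]) m)) - insert a S. p b < R}))
        \<le> real (card (PS n (insert a S) (qv v))) * m * cv v / real (n - card (insert a S))"
        unfolding cv_def by (rule Suc.IH[OF qvp[OF v]]) (use aS S hS in auto)
      thus "?thesis v" using cardPv[OF v] fib[OF v] cardS by (simp add: N_def)
    qed
    have "(\<Sum>p\<in>PS n S q. X p) = (\<Sum>v\<in>W. \<Sum>p\<in>{p \<in> PS n S q. p a = v}. X p)"
      by (rule sum.group[symmetric]) (use img finite_PS in \<open>auto simp: W_def\<close>)
    also have "\<dots> \<le> (\<Sum>v\<in>W. F * of_bool (v < R) + F * m * cv v / real (N - 1))"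
    proof (rule sum_mono)
      fix v assume v: "v \<in> W"
      have "(\<Sum>p\<in>{p \<in> PS n S q. p a = v}. X p) \<le> (\<Sum>p\<in>{p \<in> PS n S q. p a = v}. of_bool (v < R) + real (card {b \<in> set (map fst (cont t p (h @ [(a, v)]) m)) - insert a S. p b < R}))"
        by (rule sum_mono) (rule step[OF v])
      also have "\<dots> = F * of_bool (v < R) + (\<Sum>p\<in>{p \<in> PS n S q. p a = v}. real (card {b \<in> set (map fst (cont t p (h @ [(a, v)]) m)) - insert a S. p b < R}))"
        using cardPv[OF v] by (simp add: sum.distrib)
      also have "\<dots> \<le> F * of_bool (v < R) + F * m * cv v / real (N - 1)"
        using IH[OF v] by simp
      finally show "(\<Sum>p\<in>{p \<in> PS n S q. p a = v}. X p) \<le> F * of_bool (v < R) + F * m * cv v / real (N - 1)" .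
    qed
    also have "\<dots> = F * c + F * m * (real N * real c - real c) / real (N - 1)"
    proof -
      have s1: "(\<Sum>v\<in>W. of_bool (v < R) :: real) = c" by (auto simp: c_def W_def intro!: arg_cong[where f=card])
      have s2: "(\<Sum>v\<in>W. real (cv v)) = real N * real c - real c"
        using cv_eq s1 cW by (simp add: sum_subtractf)
      have s3: "(\<Sum>v\<in>W. F * of_bool (v < R) + F * m * cv v / real (N - 1))
           = F * (\<Sum>v\<in>W. of_bool (v < R)) + F * m / real (N - 1) * (\<Sum>v\<in>W. real (cv v))"
        by (simp add: sum.distrib sum_distrib_left)
      show ?thesis unfolding s3 s1 s2 by simp
    qed
    also have "\<dots> \<le> N * F * Suc m * c / N"
    proof (cases "N = 1")
      case True
      then show ?thesis by (simp add: F_def algebra_simps)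
    next
      case False
      hence "N > 1" using N1 by auto
      hence "(real N * real c - real c) / real (N - 1) = c" by (simp add: of_nat_diff field_simps)
      hence "F * m * (real N * real c - real c) / real (N - 1) = F * m * c" by (metis times_divide_eq_right mult.assoc)
      thus ?thesis using N1 by (simp add: field_simps)
    qed
    finally show ?thesis using cardP by (simp add: X_def c_def N_def)
  qed
qed


fun ch :: "nat \<Rightarrow> (nat\<times>nat) list \<Rightarrow> history" where
  "ch k (x # y # r) = ((fst x, fst y), canon_gt k (snd x) (snd y)) # ch k r"
| "ch k _ = []"

definition simt :: "nat \<Rightarrow> strategy \<Rightarrow> (nat\<times>nat) list \<Rightarrow> nat" where
  "simt k s h = (let qr = s (ch k h) in if even (length h) then fst qr else snd qr)"

lemma cont_snoc: "cont t p h (Suc m) = (let h' = cont t p h m in h' @ [(t h', p (t h'))])"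
proof (induction m arbitrary: h)
  case 0
  then show ?case by simp
next
  case (Suc m)
  have "cont t p h (Suc (Suc m)) = cont t p (h @ [(t h, p (t h))]) (Suc m)" by (simp only: cont.simps)
  also have "\<dots> = (let h' = cont t p (h @ [(t h, p (t h))]) m in h' @ [(t h', p (t h'))])" by (rule Suc.IH)
  also have "cont t p (h @ [(t h, p (t h))]) m = cont t p h (Suc m)" by (simp only: cont.simps)
  finally show ?case .
qed

lemma length_cont: "length (cont t p h m) = length h + m"
  by (induction m arbitrary: h) auto

lemma ch_append: "even (length xs) \<Longrightarrow> ch k (xs @ ys) = ch k xs @ ch k ys"
  by (induction k xs rule: ch.induct) auto

lemma sim: "ch k (cont (simt k s) p [] (2*m)) = run s (inst_gt k p) m"
proof (induction m)
  case 0
  then show ?case by simp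
next
  case (Suc m)
  define h where "h = cont (simt k s) p [] (2*m)"
  have lh: "length h = 2*m" by (simp add: h_def length_cont)
  define a1 where "a1 = fst (s (ch k h))"
  have t1: "simt k s h = a1" using lh by (simp add: simt_def a1_def Let_def)
  define a2 where "a2 = snd (s (ch k h))"
  have t2: "simt k s (h @ [(a1, p a1)]) = a2"
    using lh ch_append[of h k "[(a1, p a1)]"] by (simp add: simt_def a2_def Let_def)
  have "cont (simt k s) p [] (2 * Suc m) = h @ [(a1, p a1), (a2, p a2)]"
  proof -
    have e: "2 * Suc m = Suc (Suc (2*m))" by simp
    show ?thesis unfolding e cont_snoc[of _ _ _ "Suc (2*m)"] cont_snoc[of _ _ _ "2*m"] Let_def h_def[symmetric] t1 t2
      by simp
  qed
  hence "ch k (cont (simt k s) p [] (2 * Suc m)) = ch k h @ [((a1, a2), canon_gt k (p a1) (p a2))]"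
    using lh ch_append[of h k "[(a1, p a1), (a2, p a2)]"] by simp
  also have "\<dots> = run s (inst_gt k p) (Suc m)"
    using Suc by (simp add: h_def[symmetric] a1_def a2_def Let_def, simp add: inst_gt_def)
  finally show ?case .
qed

lemma touched_ch: "touched (ch k h) \<subseteq> set (map fst h)"
  by (induction k h rule: ch.induct) (auto simp: touched_def)

lemma simt_valid: "valid_strategy n s \<Longrightarrow> \<forall>h. simt k s h < n"
  by (auto simp: valid_strategy_def simt_def Let_def)

lemma per_s:
  assumes R: "real (2*k+1) \<le> real n / 4" and vs: "valid_strategy n s"
  shows "(\<Sum>p\<in>{p. p permutes {0..<n}}. real (card (critical n k p \<inter> touched (run s (inst_gt k p) (n div 4)))))
    \<le> real (card {p. p permutes {0..<n}}) * real (2*k+1) / 2"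
proof -
  define m where "m = n div 4"
  define t where "t = simt k s"
  have t: "\<forall>h. t h < n" using simt_valid[OF vs] by (simp add: t_def)
  have PSe: "PS n {} id = {p. p permutes {0..<n}}" by (simp add: PS_def)
  have le: "\<And>p. real (card (critical n k p \<inter> touched (run s (inst_gt k p) m)))
      \<le> real (card {a \<in> set (map fst (cont t p [] (2*m))) - {}. p a < 2*k+1})"
  proof -
    fix p
    have "critical n k p \<inter> touched (run s (inst_gt k p) m) \<subseteq> {a \<in> set (map fst (cont t p [] (2*m))) - {}. p a < 2*k+1}"
      using touched_ch[of k "cont t p [] (2*m)"] sim[of k s p m]
      by (auto simp: critical_def t_def)
    thus "?thesis p" by (intro of_nat_mono card_mono) auto
  qed
  have "(\<Sum>p\<in>{p. p permutes {0..<n}}. real (card (critical n k p \<inter> touched (run s (inst_gt k p) m))))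
      \<le> (\<Sum>p\<in>PS n {} id. real (card {a \<in> set (map fst (cont t p [] (2*m))) - {}. p a < 2*k+1}))"
    unfolding PSe by (intro sum_mono le)
  also have "\<dots> \<le> real (card (PS n {} id)) * real (2*m) * card {w \<in> {0..<n} - id ` {}. w < 2*k+1} / real (n - card {})"
    using core[of id n "{}" "[]" t "2*m" "2*k+1"] t by simp
  also have "card {w \<in> {0..<n} - id ` {}. w < 2*k+1} = 2*k+1"
  proof -
    have "2*k+1 \<le> n" using R by linarith
    hence "{w \<in> {0..<n} - id ` {}. w < 2*k+1} = {0..<2*k+1}" by auto
    thus ?thesis by simp
  qed
  also have "real (card (PS n {} id)) * real (2*m) * real (2*k+1) / real (n - card {})
     \<le> real (card (PS n {} id)) * real (2*k+1) / 2"
  proof -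
    have n0: "n > 0" using R by linarith
    have "real (2*m) \<le> real n / 2" unfolding m_def by linarith
    hence "real (2*m) / real n \<le> 1/2" using n0 by (simp add: field_simps)
    hence "real (card (PS n {} id)) * real (2*k+1) * (real (2*m) / real n) \<le> real (card (PS n {} id)) * real (2*k+1) * (1/2)"
      by (intro mult_left_mono) auto
    thus ?thesis by (simp add: field_simps)
  qed
  finally show ?thesis unfolding PSe m_def .
qed

theorem mainTheorem9:
  fixes n k :: nat and A :: "strategy pmf"
  assumes "real (2*k+1) \<le> real n / 4"
    and "\<forall>s \<in> set_pmf A. valid_strategy n s"
  shows "measure_pmf.expectation (pair_pmf (hard_instance n) A)
           (\<lambda>(p, s). real (card (critical n k p \<inter> touched (run s (inst_gt k p) (n div 4)))))
         \<le> real (2*k+1) / 2"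
proof -
  define P where "P = {p. p permutes {0..<n}}"
  define f where "f = (\<lambda>(p, s). real (card (critical n k p \<inter> touched (run s (inst_gt k p) (n div 4)))))"
  have Pne: "P \<noteq> {}" using permutes_id unfolding P_def by blast
  have Pfin: "finite P" unfolding P_def by (simp add: finite_permutations)
  have cP: "card P > 0" using Pne Pfin by (simp add: card_gt_0_iff)
  have "(\<integral>\<^sup>+x. ennreal (f x) \<partial>pair_pmf (hard_instance n) A)
      = (\<integral>\<^sup>+p. \<integral>\<^sup>+s. ennreal (f (p, s)) \<partial>A \<partial>pmf_of_set P)"
    by (simp add: nn_integral_pair_pmf' hard_instance_def P_def)
  also have "\<dots> = (\<Sum>p\<in>P. \<integral>\<^sup>+s. ennreal (f (p, s)) \<partial>A) / card P"
    by (rule nn_integral_pmf_of_set[OF Pne Pfin])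
  finally have eq1: "(\<integral>\<^sup>+x. ennreal (f x) \<partial>pair_pmf (hard_instance n) A) = (\<Sum>p\<in>P. \<integral>\<^sup>+s. ennreal (f (p, s)) \<partial>A) / card P" .
  have "(\<Sum>p\<in>P. \<integral>\<^sup>+s. ennreal (f (p, s)) \<partial>A) = (\<integral>\<^sup>+s. (\<Sum>p\<in>P. ennreal (f (p, s))) \<partial>A)"
    by (rule nn_integral_sum[symmetric]) simp
  also have "\<dots> \<le> (\<integral>\<^sup>+s. ennreal (real (card P) * real (2*k+1) / 2) \<partial>A)"
  proof (rule nn_integral_mono_AE)
    show "AE s in measure_pmf A. (\<Sum>p\<in>P. ennreal (f (p, s))) \<le> ennreal (real (card P) * real (2*k+1) / 2)"
    proof (rule AE_pmfI)
      fix s assume "s \<in> set_pmf A"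
      hence vs: "valid_strategy n s" using assms(2) by auto
      have "(\<Sum>p\<in>P. ennreal (f (p, s))) = ennreal (\<Sum>p\<in>P. f (p, s))"
        by (rule sum_ennreal) (simp add: f_def)
      also have "\<dots> \<le> ennreal (real (card P) * real (2*k+1) / 2)"
        using per_s[OF assms(1) vs] by (intro ennreal_leI) (simp add: f_def P_def)
      finally show "(\<Sum>p\<in>P. ennreal (f (p, s))) \<le> ennreal (real (card P) * real (2*k+1) / 2)" .
    qed
  qed
  also have "\<dots> = ennreal (real (card P) * real (2*k+1) / 2)" by simp
  finally have sb: "(\<Sum>p\<in>P. \<integral>\<^sup>+s. ennreal (f (p, s)) \<partial>A) \<le> ennreal (real (card P) * real (2*k+1) / 2)" .
  have "(\<integral>\<^sup>+x. ennreal (f x) \<partial>pair_pmf (hard_instance n) A) \<le> ennreal (real (card P) * real (2*k+1) / 2) / card P"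
    unfolding eq1 by (rule divide_right_mono_ennreal[OF sb])
  also have "\<dots> = ennreal (real (2*k+1) / 2)"
    using cP by (simp add: ennreal_of_nat_eq_real_of_nat divide_ennreal)
  finally have nn: "(\<integral>\<^sup>+x. ennreal (f x) \<partial>pair_pmf (hard_instance n) A) \<le> ennreal (real (2*k+1) / 2)" .
  have "measure_pmf.expectation (pair_pmf (hard_instance n) A) f
      = enn2real (\<integral>\<^sup>+x. ennreal (f x) \<partial>pair_pmf (hard_instance n) A)"
    by (rule integral_eq_nn_integral) (auto simp: f_def)
  also have "\<dots> \<le> real (2*k+1) / 2"
    by (rule enn2real_leI) (use nn in auto)
  finally show ?thesis by (simp add: f_def)
qed

end
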